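(* For any positive integer $T$, $x \in \{0,1\}^T$, $p \in [0,1]^T$, $m = |\{p_1,\ldots,p_T\}|$ and $\epsilon > 0$, there exist a set $S \subset [0,1]$ of size at most $2m+3$ and distributions $\mathcal{D}_1,\ldots,\mathcal{D}_T$ supported on $S$ such that $\mathcal{D} = (\mathcal{D}_1,\ldots,\mathcal{D}_T) \in \underline{\mathcal{C}}(x)$ and $\|p - \mathcal{D}\|_1 \le 20\cdot \mathsf{LowerCalDist}(x,p) + \epsilon$.
   Context: Let $\underline{\mathcal{C}}(x)$ be the set of $T$-tuples $\mathcal{D} = (\mathcal{D}_1,\ldots,\mathcal{D}_T)$ of probability distributions, each with finite support contained in $[0,1]$, such that $\sum_{t=1}^T (x_t - \alpha)\mathcal{D}_t(\alpha) = 0$ for every $\alpha \in [0,1]$. For such $\mathcal{D}$, $\|p - \mathcal{D}\|_1 = \sum_{t=1}^T \mathbb{E}_{q_t \sim \mathcal{D}_t}|p_t - q_t|$, and $\mathsf{LowerCalDist}(x,p) = \inf_{\mathcal{D} \in \underline{\mathcal{C}}(x)} \|p - \mathcal{D}\|_1$. *)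

theory Defs
  imports "HOL-Probability.Probability"
begin

(* Time steps are indexed by t \<in> {..<T} (i.e. 0..T-1 instead of 1..T).
   A T-tuple of distributions is a function D :: nat \<Rightarrow> real pmf; only D t for t < T matter. *)

definition lower_cal_set :: "nat \<Rightarrow> (nat \<Rightarrow> real) \<Rightarrow> (nat \<Rightarrow> real pmf) set" where
  "lower_cal_set T x = {D.
     (\<forall>t<T. finite (set_pmf (D t)) \<and> set_pmf (D t) \<subseteq> {0..1}) \<and>
     (\<forall>\<alpha>\<in>{0..1::real}. (\<Sum>t<T. (x t - \<alpha>) * pmf (D t) \<alpha>) = 0)}"

definition l1_dist :: "nat \<Rightarrow> (nat \<Rightarrow> real) \<Rightarrow> (nat \<Rightarrow> real pmf) \<Rightarrow> real" where
  "l1_dist T p D = (\<Sum>t<T. measure_pmf.expectation (D t) (\<lambda>q. \<bar>p t - q\<bar>))"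

definition LowerCalDist :: "nat \<Rightarrow> (nat \<Rightarrow> real) \<Rightarrow> (nat \<Rightarrow> real) \<Rightarrow> real" where
  "LowerCalDist T x p = (INF D\<in>lower_cal_set T x. l1_dist T p D)"

end

theory Submission
  imports Defs
begin

lemma lin_dep:
  fixes f :: "'u \<Rightarrow> 'k \<Rightarrow> real"
  assumes "finite K" "finite U" "card U > card K"
  shows "\<exists>l. (\<exists>a\<in>U. l a \<noteq> 0) \<and> (\<forall>c\<in>K. (\<Sum>a\<in>U. l a * f a c) = 0)"
  using assms
proof (induction K arbitrary: U f rule: finite_induct)
  case empty
  then obtain a where "a \<in> U" by (metis card.empty card_gt_0_iff ex_in_conv)
  then show ?case by (intro exI[of _ "\<lambda>b. if b = a then 1 else 0"]) auto
next
  case (insert c K)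
  show ?case
  proof (cases "\<forall>a\<in>U. f a c = 0")
    case True
    from insert.IH[of U f] insert.prems insert.hyps obtain l where
      l: "\<exists>a\<in>U. l a \<noteq> 0" "\<forall>d\<in>K. (\<Sum>a\<in>U. l a * f a d) = 0" by auto
    show ?thesis using l True by (intro exI[of _ l]) auto
  next
    case False
    then obtain a0 where a0: "a0 \<in> U" "f a0 c \<noteq> 0" by blast
    define g where "g a d = f a d - (f a c / f a0 c) * f a0 d" for a d
    have cd: "card (U - {a0}) > card K" using insert.prems a0 insert.hyps by simp
    from insert.IH[of "U - {a0}" g] cd insert.prems obtain mu where
      mu: "\<exists>a\<in>U-{a0}. mu a \<noteq> 0" "\<forall>d\<in>K. (\<Sum>a\<in>U-{a0}. mu a * g a d) = 0" by auto
    define l where "l a = (if a = a0 then - (\<Sum>b\<in>U-{a0}. mu b * f b c) / f a0 c else mu a)" for a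
    have split: "(\<Sum>a\<in>U. l a * f a d) = l a0 * f a0 d + (\<Sum>a\<in>U-{a0}. mu a * f a d)" for d
      using sum.remove[OF insert.prems(1) a0(1), of "\<lambda>a. l a * f a d"] by (simp add: l_def)
    have gsum: "(\<Sum>a\<in>U-{a0}. mu a * g a d) = (\<Sum>a\<in>U-{a0}. mu a * f a d) - (\<Sum>a\<in>U-{a0}. mu a * f a c) / f a0 c * f a0 d" for d
      unfolding g_def by (simp add: right_diff_distrib sum_subtractf sum_distrib_left sum_distrib_right sum_divide_distrib mult.commute mult.left_commute)
    show ?thesis
    proof (intro exI[of _ l] conjI ballI)
      show "\<exists>a\<in>U. l a \<noteq> 0" using mu(1) by (auto simp: l_def)
    next
      fix d assume "d \<in> insert c K"
      then show "(\<Sum>a\<in>U. l a * f a d) = 0"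
      proof
        assume "d = c" then show ?thesis using a0 by (simp only: split) (simp add: l_def)
      next
        assume "d \<in> K" then show ?thesis using mu(2) gsum[of d] by (simp only: split) (simp add: l_def)
      qed
    qed
  qed
qed

lemma finite_pmf_exists:
  fixes f :: "'a \<Rightarrow> real"
  assumes "finite A" "\<forall>a\<in>A. f a \<ge> 0" "(\<Sum>a\<in>A. f a) = 1"
  shows "\<exists>P. \<forall>a. pmf P a = (if a \<in> A then f a else 0)"
proof -
  define g where "g a = (if a \<in> A then f a else 0)" for a
  have nn: "\<And>x. 0 \<le> g x" using assms(2) by (simp add: g_def)
  have "(\<integral>\<^sup>+x. ennreal (g x) \<partial>count_space UNIV) = (\<Sum>x\<in>A. ennreal (g x))"
    using assms(1) by (intro nn_integral_count_space') (auto simp: g_def)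
  also have "\<dots> = ennreal (\<Sum>x\<in>A. g x)" using nn by (simp add: sum_ennreal)
  also have "\<dots> = 1" using assms(3) by (simp add: g_def)
  finally have "(\<integral>\<^sup>+x. ennreal (g x) \<partial>count_space UNIV) = 1" .
  then show ?thesis using pmf_embed_pmf[of g] nn unfolding g_def by blast
qed

lemma reduce:
  fixes C :: "(real \<times> real) set" and W :: "real \<times> real \<Rightarrow> real \<Rightarrow> real"
  assumes "finite C" "finite U"
    "\<forall>c\<in>C. \<forall>a\<in>U. W c a \<ge> 0"
    "\<forall>a\<in>U. (\<Sum>c\<in>C. W c a * (snd c - a)) = 0"
  shows "\<exists>U' W'. U' \<subseteq> U \<and> card U' \<le> card C \<and> (\<forall>c\<in>C. \<forall>a\<in>U'. W' c a \<ge> 0) \<and>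
     (\<forall>c\<in>C. (\<Sum>a\<in>U'. W' c a) = (\<Sum>a\<in>U. W c a)) \<and>
     (\<forall>a\<in>U'. (\<Sum>c\<in>C. W' c a * (snd c - a)) = 0) \<and>
     (\<Sum>c\<in>C. \<Sum>a\<in>U'. W' c a * \<bar>fst c - a\<bar>) \<le> (\<Sum>c\<in>C. \<Sum>a\<in>U. W c a * \<bar>fst c - a\<bar>)"
  using assms
proof (induction "card U" arbitrary: U W rule: less_induct)
  case less
  note fin = less.prems(1,2) and nn = less.prems(3) and cal = less.prems(4)
  show ?case
  proof (cases "card U \<le> card C")
    case True
    then show ?thesis using nn cal by (intro exI[of _ U] exI[of _ W]) auto
  next
    case big: False
    show ?thesis
    proof (cases "\<exists>a0\<in>U. \<forall>c\<in>C. W c a0 = 0")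
      case True
      then obtain a0 where a0: "a0 \<in> U" "\<forall>c\<in>C. W c a0 = 0" by blast
      have "card (U - {a0}) < card U" using a0 fin by (meson card_Diff1_less)
      from less.hyps[OF this, of W] fin nn cal obtain U' W' where
        H: "U' \<subseteq> U - {a0}" "card U' \<le> card C" "(\<forall>c\<in>C. \<forall>a\<in>U'. W' c a \<ge> 0)"
        "(\<forall>c\<in>C. (\<Sum>a\<in>U'. W' c a) = (\<Sum>a\<in>U-{a0}. W c a))"
        "(\<forall>a\<in>U'. (\<Sum>c\<in>C. W' c a * (snd c - a)) = 0)"
        "(\<Sum>c\<in>C. \<Sum>a\<in>U'. W' c a * \<bar>fst c - a\<bar>) \<le> (\<Sum>c\<in>C. \<Sum>a\<in>U-{a0}. W c a * \<bar>fst c - a\<bar>)"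
        by auto
      have e1: "(\<Sum>a\<in>U-{a0}. W c a) = (\<Sum>a\<in>U. W c a)" if "c \<in> C" for c
        using sum.remove[OF fin(2) a0(1), of "W c"] a0(2) that by simp
      have e2: "(\<Sum>a\<in>U-{a0}. W c a * \<bar>fst c - a\<bar>) = (\<Sum>a\<in>U. W c a * \<bar>fst c - a\<bar>)" if "c \<in> C" for c
        using sum.remove[OF fin(2) a0(1), of "\<lambda>a. W c a * \<bar>fst c - a\<bar>"] a0(2) that by simp
      have "(\<Sum>c\<in>C. \<Sum>a\<in>U-{a0}. W c a * \<bar>fst c - a\<bar>) = (\<Sum>c\<in>C. \<Sum>a\<in>U. W c a * \<bar>fst c - a\<bar>)"
        using e2 by (rule sum.cong[OF refl])
      then show ?thesis using H e1 by (intro exI[of _ U'] exI[of _ W']) auto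
    next
      case False
      then have col: "\<forall>a\<in>U. \<exists>c\<in>C. W c a \<noteq> 0" by blast
      from lin_dep[of C U "\<lambda>a c. W c a"] fin big obtain l where
        l: "\<exists>a\<in>U. l a \<noteq> 0" "\<forall>c\<in>C. (\<Sum>a\<in>U. l a * W c a) = 0" by auto
      define cst where "cst a = (\<Sum>c\<in>C. W c a * \<bar>fst c - a\<bar>)" for a
      define mu where "mu = (if (\<Sum>a\<in>U. l a * cst a) \<le> 0 then l else (\<lambda>a. - l a))"
      have mu1: "\<exists>a\<in>U. mu a \<noteq> 0" using l(1) by (auto simp: mu_def)
      have mu2: "\<forall>c\<in>C. (\<Sum>a\<in>U. mu a * W c a) = 0" using l(2) by (auto simp: mu_def sum_negf)
      have mu3: "(\<Sum>a\<in>U. mu a * cst a) \<le> 0" by (auto simp: mu_def sum_negf)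
      have "\<exists>a\<in>U. mu a < 0"
      proof (rule ccontr)
        assume "\<not> ?thesis"
        then have pos: "\<forall>a\<in>U. mu a \<ge> 0" by auto
        from mu1 obtain a1 where a1: "a1 \<in> U" "mu a1 \<noteq> 0" by blast
        from col a1 obtain c1 where c1: "c1 \<in> C" "W c1 a1 \<noteq> 0" by blast
        have "0 < mu a1 * W c1 a1" using pos a1 c1 nn by (simp add: less_le)
        also have "\<dots> \<le> (\<Sum>a\<in>U. mu a * W c1 a)"
          using pos nn c1 a1 fin by (intro member_le_sum) auto
        finally show False using mu2 c1 by simp
      qed
      define N where "N = {a\<in>U. mu a < 0}"
      have N: "finite N" "N \<noteq> {}" using fin \<open>\<exists>a\<in>U. mu a < 0\<close> by (auto simp: N_def)
      obtain a0 where a0: "a0 \<in> N" "mu a0 = Min (mu ` N)"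
      proof -
        have "Min (mu ` N) \<in> mu ` N" using N by (intro Min_in) auto
        then show ?thesis using that by (metis imageE)
      qed
      have a0min: "mu a0 \<le> mu a" if "a \<in> N" for a using a0 N that by simp
      have a0U: "a0 \<in> U" and a0neg: "mu a0 < 0" using a0 by (auto simp: N_def)
      define s where "s = - 1 / mu a0"
      have spos: "s > 0" using a0neg by (simp add: s_def)
      define W' where "W' c a = (1 + s * mu a) * W c a" for c a
      have fac: "1 + s * mu a \<ge> 0" if "a \<in> U" for a
      proof (cases "mu a < 0")
        case True
        then have "a \<in> N" using that by (simp add: N_def)
        then have "mu a0 \<le> mu a" by (rule a0min)
        then have "mu a0 / (- mu a0) \<le> mu a / (- mu a0)" using a0neg by (intro divide_right_mono) auto
        then show ?thesis using a0neg by (simp add: s_def)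
      next
        case False then show ?thesis using spos by simp
      qed
      have fac0: "1 + s * mu a0 = 0" using a0neg by (simp add: s_def)
      have "card (U - {a0}) < card U" using a0U fin by (meson card_Diff1_less)
      moreover have nn': "\<forall>c\<in>C. \<forall>a\<in>U-{a0}. W' c a \<ge> 0" using fac nn by (auto simp: W'_def)
      moreover have cal': "\<forall>a\<in>U-{a0}. (\<Sum>c\<in>C. W' c a * (snd c - a)) = 0"
      proof
        fix a assume "a \<in> U - {a0}"
        then have "(\<Sum>c\<in>C. W' c a * (snd c - a)) = (1 + s * mu a) * (\<Sum>c\<in>C. W c a * (snd c - a))"
          by (simp add: W'_def sum_distrib_left mult.assoc)
        then show "(\<Sum>c\<in>C. W' c a * (snd c - a)) = 0" using cal \<open>a \<in> U - {a0}\<close> by simp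
      qed
      ultimately obtain U' W'' where
        H: "U' \<subseteq> U - {a0}" "card U' \<le> card C" "(\<forall>c\<in>C. \<forall>a\<in>U'. W'' c a \<ge> 0)"
        "(\<forall>c\<in>C. (\<Sum>a\<in>U'. W'' c a) = (\<Sum>a\<in>U-{a0}. W' c a))"
        "(\<forall>a\<in>U'. (\<Sum>c\<in>C. W'' c a * (snd c - a)) = 0)"
        "(\<Sum>c\<in>C. \<Sum>a\<in>U'. W'' c a * \<bar>fst c - a\<bar>) \<le> (\<Sum>c\<in>C. \<Sum>a\<in>U-{a0}. W' c a * \<bar>fst c - a\<bar>)"
        using less.hyps[of "U - {a0}" W'] fin by auto
      have W'0: "W' c a0 = 0" for c by (simp add: W'_def fac0)
      have e1: "(\<Sum>a\<in>U-{a0}. W' c a) = (\<Sum>a\<in>U. W c a)" if "c \<in> C" for c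
      proof -
        have "(\<Sum>a\<in>U-{a0}. W' c a) = (\<Sum>a\<in>U. W' c a)"
          using sum.remove[OF fin(2) a0U, of "W' c"] W'0 by simp
        also have "\<dots> = (\<Sum>a\<in>U. W c a) + s * (\<Sum>a\<in>U. mu a * W c a)"
          by (simp add: W'_def algebra_simps sum.distrib sum_distrib_left)
        finally show ?thesis using mu2 that by simp
      qed
      have "(\<Sum>c\<in>C. \<Sum>a\<in>U-{a0}. W' c a * \<bar>fst c - a\<bar>) = (\<Sum>c\<in>C. \<Sum>a\<in>U. W' c a * \<bar>fst c - a\<bar>)"
      proof (rule sum.cong[OF refl])
        fix c show "(\<Sum>a\<in>U-{a0}. W' c a * \<bar>fst c - a\<bar>) = (\<Sum>a\<in>U. W' c a * \<bar>fst c - a\<bar>)"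
          using sum.remove[OF fin(2) a0U, of "\<lambda>a. W' c a * \<bar>fst c - a\<bar>"] W'0 by simp
      qed
      also have "\<dots> = (\<Sum>c\<in>C. \<Sum>a\<in>U. W c a * \<bar>fst c - a\<bar>) + s * (\<Sum>c\<in>C. \<Sum>a\<in>U. mu a * (W c a * \<bar>fst c - a\<bar>))"
        by (simp add: W'_def algebra_simps sum.distrib sum_distrib_left)
      also have "(\<Sum>c\<in>C. \<Sum>a\<in>U. mu a * (W c a * \<bar>fst c - a\<bar>)) = (\<Sum>a\<in>U. mu a * cst a)"
        by (subst sum.swap) (simp add: cst_def sum_distrib_left)
      also have "(\<Sum>c\<in>C. \<Sum>a\<in>U. W c a * \<bar>fst c - a\<bar>) + s * (\<Sum>a\<in>U. mu a * cst a) \<le> (\<Sum>c\<in>C. \<Sum>a\<in>U. W c a * \<bar>fst c - a\<bar>)"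
        using spos mu3 by (simp add: mult_nonneg_nonpos)
      finally have "(\<Sum>c\<in>C. \<Sum>a\<in>U-{a0}. W' c a * \<bar>fst c - a\<bar>) \<le> (\<Sum>c\<in>C. \<Sum>a\<in>U. W c a * \<bar>fst c - a\<bar>)" .
      then show ?thesis using H e1 by (intro exI[of _ U'] exI[of _ W'']) auto
    qed
  qed
qed

lemma class_avg:
  fixes h :: "'b \<Rightarrow> real" and g :: "'a \<Rightarrow> 'b"
  assumes "finite S"
  shows "(\<Sum>t\<in>S. h (g t) / real (card {s\<in>S. g s = g t})) = (\<Sum>c\<in>g`S. h c)"
proof -
  have "(\<Sum>t\<in>S. h (g t) / real (card {s\<in>S. g s = g t})) =
        (\<Sum>c\<in>g`S. \<Sum>t\<in>{t\<in>S. g t = c}. h (g t) / real (card {s\<in>S. g s = g t}))"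
    using assms by (rule sum.image_gen)
  also have "\<dots> = (\<Sum>c\<in>g`S. \<Sum>t\<in>{t\<in>S. g t = c}. h c / real (card {s\<in>S. g s = c}))"
    by (intro sum.cong refl) auto
  also have "\<dots> = (\<Sum>c\<in>g`S. h c)"
  proof (intro sum.cong refl)
    fix c assume "c \<in> g ` S"
    then have "card {s\<in>S. g s = c} > 0" using assms by (auto simp: card_gt_0_iff)
    then show "(\<Sum>t\<in>{t\<in>S. g t = c}. h c / real (card {s\<in>S. g s = c})) = h c" by simp
  qed
  finally show ?thesis .
qed

theorem lemma4:
  fixes T :: nat and x p :: "nat \<Rightarrow> real" and m :: nat and \<epsilon> :: real
  assumes "T > 0"
    and "\<forall>t<T. x t \<in> {0, 1}"
    and "\<forall>t<T. p t \<in> {0..1}"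
    and "m = card (p ` {..<T})"
    and "\<epsilon> > 0"
  shows "\<exists>S D. S \<subseteq> {0..1} \<and> finite S \<and> card S \<le> 2 * m + 3 \<and>
           (\<forall>t<T. set_pmf (D t) \<subseteq> S) \<and>
           D \<in> lower_cal_set T x \<and>
           l1_dist T p D \<le> 20 * LowerCalDist T x p + \<epsilon>"
proof -
  note xb = assms(2) and pb = assms(3)
  define cls where "cls t = (p t, x t)" for t
  define C where "C = cls ` {..<T}"
  define n where "n c = real (card {s\<in>{..<T}. cls s = c})" for c
  have finC: "finite C" by (simp add: C_def)
  have cardC: "card C \<le> 2 * m"
  proof -
    have "C \<subseteq> (p ` {..<T}) \<times> {0, 1}" using xb by (auto simp: C_def cls_def)
    then have "card C \<le> card ((p ` {..<T}) \<times> {0::real, 1})" by (intro card_mono) auto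
    also have "\<dots> = m * 2" using assms(4) by (simp add: card_cartesian_product)
    finally show ?thesis by simp
  qed
  define mu where "mu = (\<Sum>t<T. x t) / real T"
  have mu01: "mu \<in> {0..1}"
  proof -
    have "(\<Sum>t<T. x t) \<ge> 0" using xb by (intro sum_nonneg) auto
    moreover have "(\<Sum>t<T. x t) \<le> (\<Sum>t<T. 1)" using xb by (intro sum_mono) auto
    ultimately show ?thesis using assms(1) by (auto simp: mu_def divide_simps)
  qed
  have D0: "(\<lambda>t. return_pmf mu) \<in> lower_cal_set T x"
    unfolding lower_cal_set_def
  proof (intro CollectI conjI allI impI ballI)
    fix a :: real
    show "(\<Sum>t<T. (x t - a) * pmf (return_pmf mu) a) = 0"
    proof (cases "a = mu")
      case True
      have "(\<Sum>t<T. (x t - a)) = (\<Sum>t<T. x t) - real T * mu" using True by (simp add: sum_subtractf)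
      also have "\<dots> = 0" using assms(1) by (simp add: mu_def)
      finally show ?thesis by (simp add: pmf_return True[symmetric])
    qed (simp add: pmf_return)
  qed (use mu01 in auto)
  have nonneg: "l1_dist T p D \<ge> 0" for D
    unfolding l1_dist_def by (intro sum_nonneg integral_nonneg_AE) auto
  have ne: "lower_cal_set T x \<noteq> {}" using D0 by blast
  have bdd: "bdd_below (l1_dist T p ` lower_cal_set T x)"
    using nonneg by (intro bdd_belowI2) auto
  have LCD0: "LowerCalDist T x p \<ge> 0"
    unfolding LowerCalDist_def using ne nonneg by (intro cINF_greatest) auto
  have "LowerCalDist T x p < LowerCalDist T x p + \<epsilon>" using assms(5) by simp
  then obtain D where D: "D \<in> lower_cal_set T x" and Dlt: "l1_dist T p D < LowerCalDist T x p + \<epsilon>"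
    unfolding LowerCalDist_def using cINF_less_iff[OF ne bdd] by blast
  have Dfin: "\<forall>t<T. finite (set_pmf (D t)) \<and> set_pmf (D t) \<subseteq> {0..1}"
    and Dcal: "\<forall>a\<in>{0..1::real}. (\<Sum>t<T. (x t - a) * pmf (D t) a) = 0"
    using D by (auto simp: lower_cal_set_def)
  define U where "U = (\<Union>t<T. set_pmf (D t))"
  have finU: "finite U" and U01: "U \<subseteq> {0..1}" using Dfin by (auto simp: U_def)
  have sub: "set_pmf (D t) \<subseteq> U" if "t < T" for t using that by (auto simp: U_def)
  define W where "W c a = (\<Sum>t\<in>{t\<in>{..<T}. cls t = c}. pmf (D t) a)" for c a
  have regroup: "(\<Sum>c\<in>C. \<Sum>t\<in>{t\<in>{..<T}. cls t = c}. h t) = (\<Sum>t<T. h t)" for h :: "nat \<Rightarrow> real"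
    unfolding C_def by (rule sum.image_gen[symmetric]) simp
  have Wnn: "\<forall>c\<in>C. \<forall>a\<in>U. W c a \<ge> 0" by (auto simp: W_def intro!: sum_nonneg)
  have Wcal: "\<forall>a\<in>U. (\<Sum>c\<in>C. W c a * (snd c - a)) = 0"
  proof
    fix a assume a: "a \<in> U"
    have "(\<Sum>c\<in>C. W c a * (snd c - a)) = (\<Sum>c\<in>C. \<Sum>t\<in>{t\<in>{..<T}. cls t = c}. (x t - a) * pmf (D t) a)"
      unfolding W_def sum_distrib_right by (intro sum.cong refl) (auto simp: cls_def)
    also have "\<dots> = 0" using regroup Dcal a U01 by auto
    finally show "(\<Sum>c\<in>C. W c a * (snd c - a)) = 0" .
  qed
  obtain U' W' where R: "U' \<subseteq> U" "card U' \<le> card C" "\<forall>c\<in>C. \<forall>a\<in>U'. W' c a \<ge> 0"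
     "\<forall>c\<in>C. (\<Sum>a\<in>U'. W' c a) = (\<Sum>a\<in>U. W c a)"
     "\<forall>a\<in>U'. (\<Sum>c\<in>C. W' c a * (snd c - a)) = 0"
     "(\<Sum>c\<in>C. \<Sum>a\<in>U'. W' c a * \<bar>fst c - a\<bar>) \<le> (\<Sum>c\<in>C. \<Sum>a\<in>U. W c a * \<bar>fst c - a\<bar>)"
    using reduce[OF finC finU Wnn Wcal] by blast
  have finU': "finite U'" using R(1) finU by (rule finite_subset)
  have npos: "n (cls t) > 0" if "t < T" for t
    using that by (auto simp: n_def card_gt_0_iff)
  have marg: "(\<Sum>a\<in>U. W c a) = n c" for c
  proof -
    have "(\<Sum>a\<in>U. W c a) = (\<Sum>t\<in>{t\<in>{..<T}. cls t = c}. \<Sum>a\<in>U. pmf (D t) a)"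
      unfolding W_def by (rule sum.swap)
    also have "\<dots> = (\<Sum>t\<in>{t\<in>{..<T}. cls t = c}. 1)"
      using finU sub by (intro sum.cong refl sum_pmf_eq_1) auto
    finally show ?thesis by (simp add: n_def)
  qed
  have "\<forall>t\<in>{..<T}. \<exists>P. \<forall>a. pmf P a = (if a \<in> U' then W' (cls t) a / n (cls t) else 0)"
  proof
    fix t assume t: "t \<in> {..<T}"
    have cC: "cls t \<in> C" using t by (simp add: C_def)
    show "\<exists>P. \<forall>a. pmf P a = (if a \<in> U' then W' (cls t) a / n (cls t) else 0)"
    proof (rule finite_pmf_exists[OF finU'])
      show "\<forall>a\<in>U'. 0 \<le> W' (cls t) a / n (cls t)" using R(3) cC npos[of t] t by (auto intro!: divide_nonneg_pos)
      have "(\<Sum>a\<in>U'. W' (cls t) a / n (cls t)) = (\<Sum>a\<in>U'. W' (cls t) a) / n (cls t)"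
        by (simp add: sum_divide_distrib)
      also have "\<dots> = 1" using R(4) cC marg npos[of t] t by auto
      finally show "(\<Sum>a\<in>U'. W' (cls t) a / n (cls t)) = 1" .
    qed
  qed
  then obtain D' where D': "\<forall>t\<in>{..<T}. \<forall>a. pmf (D' t) a = (if a \<in> U' then W' (cls t) a / n (cls t) else 0)"
    by (metis bchoice)
  have setD': "set_pmf (D' t) \<subseteq> U'" if "t < T" for t
    using D' that by (auto simp: set_pmf_eq)
  have ncard: "n (cls t) = real (card {s\<in>{..<T}. cls s = cls t})" for t by (simp add: n_def)
  have D'cal: "(\<Sum>t<T. (x t - a) * pmf (D' t) a) = 0" for a
  proof -
    define h where "h c = (if a \<in> U' then W' c a * (snd c - a) else 0)" for c
    have "(\<Sum>t<T. (x t - a) * pmf (D' t) a) = (\<Sum>t<T. h (cls t) / real (card {s\<in>{..<T}. cls s = cls t}))"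
      using D' by (intro sum.cong refl) (auto simp: h_def cls_def n_def)
    also have "\<dots> = (\<Sum>c\<in>C. h c)" unfolding C_def by (rule class_avg) simp
    also have "\<dots> = 0" using R(5) by (cases "a \<in> U'") (auto simp: h_def)
    finally show ?thesis .
  qed
  have D'in: "D' \<in> lower_cal_set T x"
    unfolding lower_cal_set_def using setD' finU' R(1) U01 D'cal
    by (auto intro: finite_subset)
  have "l1_dist T p D' = (\<Sum>c\<in>C. \<Sum>a\<in>U'. W' c a * \<bar>fst c - a\<bar>)"
  proof -
    define h where "h c = (\<Sum>a\<in>U'. W' c a * \<bar>fst c - a\<bar>)" for c
    have "l1_dist T p D' = (\<Sum>t<T. \<Sum>a\<in>U'. \<bar>p t - a\<bar> * pmf (D' t) a)"
      unfolding l1_dist_def using finU' setD' by (intro sum.cong refl integral_measure_pmf_real) auto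
    also have "\<dots> = (\<Sum>t<T. h (cls t) / real (card {s\<in>{..<T}. cls s = cls t}))"
      using D' by (intro sum.cong refl) (auto simp: h_def cls_def n_def sum_divide_distrib mult.commute)
    also have "\<dots> = (\<Sum>c\<in>C. h c)" unfolding C_def by (rule class_avg) simp
    finally show ?thesis by (simp add: h_def)
  qed
  also have "\<dots> \<le> (\<Sum>c\<in>C. \<Sum>a\<in>U. W c a * \<bar>fst c - a\<bar>)" by (rule R(6))
  also have "\<dots> = l1_dist T p D"
  proof -
    have "(\<Sum>c\<in>C. \<Sum>a\<in>U. W c a * \<bar>fst c - a\<bar>) = (\<Sum>c\<in>C. \<Sum>t\<in>{t\<in>{..<T}. cls t = c}. \<Sum>a\<in>U. \<bar>p t - a\<bar> * pmf (D t) a)"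
      unfolding W_def sum_distrib_right
      by (intro sum.cong refl, subst sum.swap) (auto simp: cls_def mult.commute)
    also have "\<dots> = (\<Sum>t<T. \<Sum>a\<in>U. \<bar>p t - a\<bar> * pmf (D t) a)" by (rule regroup)
    also have "\<dots> = l1_dist T p D"
      unfolding l1_dist_def using finU sub by (intro sum.cong refl integral_measure_pmf_real[symmetric]) auto
    finally show ?thesis .
  qed
  finally have "l1_dist T p D' \<le> l1_dist T p D" .
  then have cost: "l1_dist T p D' \<le> 20 * LowerCalDist T x p + \<epsilon>" using Dlt LCD0 by linarith
  show ?thesis
    using R(1,2) cardC finU' U01 setD' D'in cost
    by (intro exI[of _ U'] exI[of _ D']) auto
qed

end
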